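(* Let $L$ be an oriented classical or virtual link with $n$ components. The forbidden matrix $\mathcal{FM}(L)\in M_n(\mathbb{Z})$ is an invariant of classical and virtual links up to conjugation by a permutation matrix.
   Context: An oriented (classical or virtual) link with $n$ components is represented by a signed Gauss diagram: $n$ oriented circles, one per component, with arrows from over-crossing point to under-crossing point, each arrow carrying the sign $\pm1$ of its crossing; virtual links are equivalence classes of such diagrams under Gauss-diagram Reidemeister moves. The forbidden moves are: interchange two adjacent arrowheads, or two adjacent arrow tails, on a circle. Using forbidden and Reidemeister moves, a Gauss diagram can be reduced to one with no arrow having both endpoints on the same circle and in which, for each ordered pair $(j,k)$ of distinct circles, all arrows from circle $j$ to circle $k$ have the same sign. The forbidden quiver $\mathcal{FQ}(L)$ is obtained by shrinking each circle of this reduced diagram to a vertex; $m$ parallel arrows of sign $\varepsilon$ from vertex $j$ to vertex $k$ are recorded as a single arrow with integer label $\varepsilon m$. The forbidden matrix $\mathcal{FM}(L)$ is the $n\times n$ integer matrix whose entry in row $j$, column $k$ is the label on the arrow from vertex $j$ to vertex $k$ of $\mathcal{FQ}(L)$ (and $0$ if there is no such arrow; in particular the diagonal is $0$). *)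

theory Defs
  imports "HOL-Combinatorics.Permutations"
begin

text \<open>An endpoint is a pair (a, h): arrow label a, h = True for the arrowhead
  (under-crossing), h = False for the arrow tail (over-crossing).
  A diagram is a list of n words (one per circle, read along the orientation
  of the circle, considered cyclically) together with a sign function on labels.\<close>

type_synonym endpt = "nat \<times> bool"
type_synonym gauss = "endpt list list \<times> (nat \<Rightarrow> int)"

definition labels :: "gauss \<Rightarrow> nat set" where
  "labels D = {a. \<exists>w\<in>set (fst D). (a, True) \<in> set w \<or> (a, False) \<in> set w}"

definition wf_gauss :: "gauss \<Rightarrow> bool" where
  "wf_gauss D \<longleftrightarrow> (\<forall>a\<in>labels D.
      count_list (concat (fst D)) (a, True) = 1 \<and>
      count_list (concat (fst D)) (a, False) = 1 \<and>
      (snd D a = 1 \<or> snd D a = -1))"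

definition gauss_iso :: "gauss \<Rightarrow> gauss \<Rightarrow> bool" where
  "gauss_iso D D' \<longleftrightarrow> (\<exists>f \<sigma> r.
      length (fst D') = length (fst D) \<and>
      \<sigma> permutes {..<length (fst D)} \<and>
      inj_on f (labels D) \<and>
      (\<forall>i<length (fst D). fst D' ! i = rotate (r i) (map (apfst f) (fst D ! \<sigma> i))) \<and>
      (\<forall>a\<in>labels D. snd D' (f a) = snd D a))"

definition ins_seg :: "endpt list list \<Rightarrow> nat \<Rightarrow> nat \<Rightarrow> endpt list \<Rightarrow> endpt list list" where
  "ins_seg ws i p seg = ws[i := take p (ws ! i) @ seg @ drop p (ws ! i)]"

definition adj :: "endpt list list \<Rightarrow> endpt \<Rightarrow> endpt \<Rightarrow> bool" where
  "adj ws x y \<longleftrightarrow> (\<exists>i xs ys. i < length ws \<and> ws ! i = xs @ [x, y] @ ys)"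

definition swp :: "endpt \<Rightarrow> endpt \<Rightarrow> endpt \<Rightarrow> endpt" where
  "swp x y e = (if e = x then y else if e = y then x else e)"

definition r1_move :: "gauss \<Rightarrow> gauss \<Rightarrow> bool" where
  "r1_move D D' \<longleftrightarrow> (\<exists>i p a e1 e2.
      i < length (fst D) \<and> p \<le> length (fst D ! i) \<and> a \<notin> labels D \<and>
      ((e1, e2) = ((a, False), (a, True)) \<or> (e1, e2) = ((a, True), (a, False))) \<and>
      fst D' = ins_seg (fst D) i p [e1, e2] \<and>
      (snd D' a = 1 \<or> snd D' a = -1) \<and>
      (\<forall>x\<in>labels D. snd D' x = snd D x))"

definition r2_move :: "gauss \<Rightarrow> gauss \<Rightarrow> bool" where
  "r2_move D D' \<longleftrightarrow> (\<exists>i p j q a b H.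
      a \<noteq> b \<and> a \<notin> labels D \<and> b \<notin> labels D \<and>
      i < length (fst D) \<and> p \<le> length (fst D ! i) \<and>
      j < length (fst D) \<and>
      q \<le> length (ins_seg (fst D) i p [(a, False), (b, False)] ! j) \<and>
      (j = i \<longrightarrow> q \<noteq> p + 1) \<and>
      (H = [(a, True), (b, True)] \<or> H = [(b, True), (a, True)]) \<and>
      fst D' = ins_seg (ins_seg (fst D) i p [(a, False), (b, False)]) j q H \<and>
      (snd D' a = 1 \<or> snd D' a = -1) \<and> snd D' b = - snd D' a \<and>
      (\<forall>x\<in>labels D. snd D' x = snd D x))"

text \<open>Reidemeister move 3: arrows a : T\<rightarrow>M, b : T\<rightarrow>B, c : M\<rightarrow>B
  (top, middle, bottom strand), whose endpoints form three segments of two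
  adjacent endpoints each; the move reverses the order on each segment.
  The side conditions describe exactly the sign/order configurations that occur
  for three oriented strands in the plane (signs of a, b, c are the crossing signs).\<close>
definition r3_move :: "gauss \<Rightarrow> gauss \<Rightarrow> bool" where
  "r3_move D D' \<longleftrightarrow> (\<exists>a b c. let ws = fst D; s = snd D;
        oT = adj ws (a, False) (b, False);
        oM = adj ws (a, True) (c, False);
        oB = adj ws (b, True) (c, True) in
      distinct [a, b, c] \<and> a \<in> labels D \<and> b \<in> labels D \<and> c \<in> labels D \<and>
      (oT \<or> adj ws (b, False) (a, False)) \<and>
      (oM \<or> adj ws (c, False) (a, True)) \<and>
      (oB \<or> adj ws (c, True) (b, True)) \<and>
      ((oT \<noteq> oM) \<longleftrightarrow> s b \<noteq> s c) \<and>
      ((oM \<noteq> oB) \<longleftrightarrow> s a \<noteq> s b) \<and>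
      snd D' = s \<and>
      fst D' = map (map (swp (a, False) (b, False) \<circ> swp (a, True) (c, False)
                          \<circ> swp (b, True) (c, True))) ws)"

definition forb_move :: "gauss \<Rightarrow> gauss \<Rightarrow> bool" where
  "forb_move D D' \<longleftrightarrow> (\<exists>x y h. x \<noteq> y \<and> adj (fst D) (x, h) (y, h) \<and>
      fst D' = map (map (swp (x, h) (y, h))) (fst D) \<and> snd D' = snd D)"

definition reid_step :: "gauss \<Rightarrow> gauss \<Rightarrow> bool" where
  "reid_step D D' \<longleftrightarrow> wf_gauss D \<and> wf_gauss D' \<and>
     (gauss_iso D D' \<or> r1_move D D' \<or> r2_move D D' \<or> r3_move D D')"

definition reid_equiv :: "gauss \<Rightarrow> gauss \<Rightarrow> bool" where
  "reid_equiv = (\<lambda>D D'. reid_step D D' \<or> reid_step D' D)\<^sup>*\<^sup>*"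

definition forb_step :: "gauss \<Rightarrow> gauss \<Rightarrow> bool" where
  "forb_step D D' \<longleftrightarrow> reid_step D D' \<or> (wf_gauss D \<and> wf_gauss D' \<and> forb_move D D')"

definition forb_equiv :: "gauss \<Rightarrow> gauss \<Rightarrow> bool" where
  "forb_equiv = (\<lambda>D D'. forb_step D D' \<or> forb_step D' D)\<^sup>*\<^sup>*"

definition arrow_from :: "gauss \<Rightarrow> nat \<Rightarrow> nat \<Rightarrow> nat \<Rightarrow> bool" where
  "arrow_from D a j k \<longleftrightarrow> j < length (fst D) \<and> k < length (fst D) \<and>
     (a, False) \<in> set (fst D ! j) \<and> (a, True) \<in> set (fst D ! k)"

definition reduced :: "gauss \<Rightarrow> bool" where
  "reduced D \<longleftrightarrow> wf_gauss D \<and>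
     (\<forall>a j. \<not> arrow_from D a j j) \<and>
     (\<forall>a b j k. arrow_from D a j k \<and> arrow_from D b j k \<longrightarrow> snd D a = snd D b)"

text \<open>Forbidden matrix entry (j,k) (indices < n): the label \<epsilon> m of the
  forbidden-quiver arrow j \<rightarrow> k, i.e. m parallel arrows of common sign \<epsilon>,
  0 if none.\<close>
definition forb_matrix :: "gauss \<Rightarrow> nat \<Rightarrow> nat \<Rightarrow> int" where
  "forb_matrix D j k =
     (let A = {a. arrow_from D a j k} in
      if A = {} then 0 else snd D (SOME a. a \<in> A) * int (card A))"

end

theory Submission
  imports Defs
begin

definition W :: "gauss \<Rightarrow> nat \<Rightarrow> nat \<Rightarrow> int" where
  "W D j k = (\<Sum>a\<in>{a. arrow_from D a j k}. snd D a)"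

lemma labels_sub: "labels D \<subseteq> fst ` set (concat (fst D))"
  unfolding labels_def by force

lemma finite_labels: "finite (labels D)"
  using labels_sub finite_subset by blast

lemma arrow_labels: "arrow_from D a j k \<Longrightarrow> a \<in> labels D"
  unfolding arrow_from_def labels_def using nth_mem by blast

lemma finite_arrows: "finite {a. arrow_from D a j k}"
  using finite_labels arrow_labels by (metis finite_subset mem_Collect_eq subsetI)

lemma not_label: "a \<notin> labels D \<Longrightarrow> m < length (fst D) \<Longrightarrow> (a, h) \<notin> set (fst D ! m)"
proof
  assume a: "a \<notin> labels D" and m: "m < length (fst D)" and h: "(a, h) \<in> set (fst D ! m)"
  have "fst D ! m \<in> set (fst D)" using m by simp
  hence "a \<in> labels D" unfolding labels_def using h by (cases h) auto
  thus False using a by simp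
qed

lemma count_concat: "count_list (concat ws) x = (\<Sum>w\<leftarrow>ws. count_list w x)"
  by (induction ws) auto

lemma unique_circle:
  assumes wf: "wf_gauss D" and e1: "e \<in> set (fst D ! i)" and e2: "e \<in> set (fst D ! m)"
    and i: "i < length (fst D)" and m: "m < length (fst D)"
  shows "i = m"
proof (rule ccontr)
  assume ne: "i \<noteq> m"
  obtain a h where e: "e = (a, h)" by fastforce
  have "a \<in> labels D" using not_label[of a D i h] e1 i e by blast
  hence c1: "count_list (concat (fst D)) e = 1" using wf e unfolding wf_gauss_def by (cases h) auto
  let ?f = "\<lambda>l. count_list (fst D ! l) e"
  have "count_list (concat (fst D)) e = (\<Sum>l = 0..<length (fst D). ?f l)"
    unfolding count_concat sum_list_sum_nth by simp
  also have "\<dots> \<ge> (\<Sum>l\<in>{i, m}. ?f l)"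
    by (rule sum_mono2) (use i m in auto)
  finally have "(\<Sum>l\<in>{i, m}. ?f l) \<le> 1" using c1 by simp
  moreover have "?f i \<ge> 1" "?f m \<ge> 1" using e1 e2 count_list_0_iff
    by (metis less_one not_less)+
  ultimately show False using ne by simp
qed

lemma adj_iff:
  assumes wf: "wf_gauss D" and ad: "adj (fst D) x y" and m: "m < length (fst D)"
  shows "x \<in> set (fst D ! m) \<longleftrightarrow> y \<in> set (fst D ! m)"
proof -
  obtain i xs ys where i: "i < length (fst D)" and w: "fst D ! i = xs @ [x, y] @ ys"
    using ad unfolding adj_def by blast
  have x: "x \<in> set (fst D ! i)" and y: "y \<in> set (fst D ! i)" using w by auto
  show ?thesis using unique_circle[OF wf x _ i m] unique_circle[OF wf y _ i m] x y by blast
qed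

lemma swp_mem: "(e1 \<in> S \<longleftrightarrow> e2 \<in> S) \<Longrightarrow> x \<in> S \<Longrightarrow> swp e1 e2 x \<in> S"
  unfolding swp_def by (cases "x = e1"; cases "x = e2") simp_all

lemma swp_swp: "swp e1 e2 (swp e1 e2 x) = x"
  unfolding swp_def by (cases "x = e1"; cases "x = e2") simp_all

lemma swp_image: "(e1 \<in> S \<longleftrightarrow> e2 \<in> S) \<Longrightarrow> swp e1 e2 ` S = S"
proof -
  assume h: "e1 \<in> S \<longleftrightarrow> e2 \<in> S"
  have "swp e1 e2 ` S \<subseteq> S" using swp_mem[OF h] by blast
  moreover have "S \<subseteq> swp e1 e2 ` S"
  proof
    fix x assume x: "x \<in> S"
    show "x \<in> swp e1 e2 ` S" using swp_swp[of e1 e2 x] swp_mem[OF h x] by (metis image_eqI)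
  qed
  ultimately show ?thesis by blast
qed

lemma W_same:
  assumes "length (fst D') = length (fst D)"
    and "\<forall>m<length (fst D). set (fst D' ! m) = set (fst D ! m)" and "snd D' = snd D"
  shows "W D' j k = W D j k"
proof -
  have "{a. arrow_from D' a j k} = {a. arrow_from D a j k}"
    using assms unfolding arrow_from_def by auto
  thus ?thesis unfolding W_def using assms by simp
qed

lemma set_ins_seg:
  assumes "i < length ws" "m < length ws"
  shows "set (ins_seg ws i p seg ! m) = (if m = i then set (ws ! i) \<union> set seg else set (ws ! m))"
proof -
  have "set (take p (ws ! i) @ seg @ drop p (ws ! i)) = set (ws ! i) \<union> set seg"
    by (metis Un_assoc Un_commute append_take_drop_id set_append)
  thus ?thesis using assms unfolding ins_seg_def by (simp add: nth_list_update)
qed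

lemma length_ins_seg[simp]: "length (ins_seg ws i p seg) = length ws"
  unfolding ins_seg_def by simp

lemma apfst_mem: "(b, h) \<in> apfst f ` S \<Longrightarrow> \<exists>a. (a, h) \<in> S \<and> f a = b"
proof -
  assume "(b, h) \<in> apfst f ` S"
  then obtain x where x: "x \<in> S" "(b, h) = apfst f x" by blast
  obtain a h' where "x = (a, h')" by (cases x)
  thus ?thesis using x by auto
qed

lemma apfst_mem2: "(a, h) \<in> S \<Longrightarrow> (f a, h) \<in> apfst f ` S"
  by (metis apfst_conv image_eqI)

lemma W_iso:
  assumes iso: "gauss_iso D D'" and wf: "wf_gauss D"
  shows "length (fst D') = length (fst D) \<and> (\<exists>\<sigma>. \<sigma> permutes {..<length (fst D)} \<and>
           (\<forall>j<length (fst D). \<forall>k<length (fst D). W D' j k = W D (\<sigma> j) (\<sigma> k)))"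
proof -
  obtain f \<sigma> r where len: "length (fst D') = length (fst D)"
    and \<sigma>: "\<sigma> permutes {..<length (fst D)}" and inj: "inj_on f (labels D)"
    and ws: "\<forall>i<length (fst D). fst D' ! i = rotate (r i) (map (apfst f) (fst D ! \<sigma> i))"
    and sg: "\<forall>a\<in>labels D. snd D' (f a) = snd D a"
    using iso unfolding gauss_iso_def by blast
  have W: "W D' j k = W D (\<sigma> j) (\<sigma> k)" if j: "j < length (fst D)" and k: "k < length (fst D)" for j k
  proof -
    have sj: "\<sigma> j < length (fst D)" and sk: "\<sigma> k < length (fst D)"
      using permutes_in_image[OF \<sigma>] j k by auto
    have setj: "set (fst D' ! j) = apfst f ` set (fst D ! \<sigma> j)" using ws j by simp
    have setk: "set (fst D' ! k) = apfst f ` set (fst D ! \<sigma> k)" using ws k by simp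
    have eq: "{b. arrow_from D' b j k} = f ` {a. arrow_from D a (\<sigma> j) (\<sigma> k)}"
    proof
      show "{b. arrow_from D' b j k} \<subseteq> f ` {a. arrow_from D a (\<sigma> j) (\<sigma> k)}"
      proof
        fix b assume "b \<in> {b. arrow_from D' b j k}"
        hence h1: "(b, False) \<in> apfst f ` set (fst D ! \<sigma> j)"
          and h2: "(b, True) \<in> apfst f ` set (fst D ! \<sigma> k)"
          unfolding arrow_from_def setj setk by auto
        obtain a where a: "(a, False) \<in> set (fst D ! \<sigma> j)" "f a = b"
          using apfst_mem[OF h1] by blast
        obtain a' where a': "(a', True) \<in> set (fst D ! \<sigma> k)" "f a' = b"
          using apfst_mem[OF h2] by blast
        have la: "a \<in> labels D" using not_label[of a D "\<sigma> j" False] a(1) sj by blast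
        have la': "a' \<in> labels D" using not_label[of a' D "\<sigma> k" True] a'(1) sk by blast
        have "f a = f a'" using a(2) a'(2) by simp
        hence "a = a'" using inj_onD[OF inj _ la la'] by blast
        hence "arrow_from D a (\<sigma> j) (\<sigma> k)" unfolding arrow_from_def using a a' sj sk by simp
        thus "b \<in> f ` {a. arrow_from D a (\<sigma> j) (\<sigma> k)}" using a by blast
      qed
    next
      show "f ` {a. arrow_from D a (\<sigma> j) (\<sigma> k)} \<subseteq> {b. arrow_from D' b j k}"
      proof
        fix b assume "b \<in> f ` {a. arrow_from D a (\<sigma> j) (\<sigma> k)}"
        then obtain a where b: "b = f a" and a: "arrow_from D a (\<sigma> j) (\<sigma> k)" by blast
        have "(b, False) \<in> apfst f ` set (fst D ! \<sigma> j)" "(b, True) \<in> apfst f ` set (fst D ! \<sigma> k)"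
        proof -
          have a1: "(a, False) \<in> set (fst D ! \<sigma> j)" and a2: "(a, True) \<in> set (fst D ! \<sigma> k)"
            using a unfolding arrow_from_def by auto
          show "(b, False) \<in> apfst f ` set (fst D ! \<sigma> j)" using apfst_mem2[OF a1, of f] b by simp
          show "(b, True) \<in> apfst f ` set (fst D ! \<sigma> k)" using apfst_mem2[OF a2, of f] b by simp
        qed
        thus "b \<in> {b. arrow_from D' b j k}" unfolding arrow_from_def setj setk using j k len by simp
      qed
    qed
    have injA: "inj_on f {a. arrow_from D a (\<sigma> j) (\<sigma> k)}"
      by (rule inj_on_subset[OF inj]) (use arrow_labels in blast)
    have "W D' j k = (\<Sum>a\<in>{a. arrow_from D a (\<sigma> j) (\<sigma> k)}. snd D' (f a))"
      unfolding W_def eq sum.reindex[OF injA] by simp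
    also have "\<dots> = W D (\<sigma> j) (\<sigma> k)" unfolding W_def
    proof (rule sum.cong)
      fix x assume "x \<in> {a. arrow_from D a (\<sigma> j) (\<sigma> k)}"
      hence "x \<in> labels D" using arrow_labels by blast
      thus "snd D' (f x) = snd D x" using sg by blast
    qed simp
    finally show ?thesis .
  qed
  show ?thesis
  proof (intro conjI exI[of _ \<sigma>] allI impI)
    show "length (fst D') = length (fst D)" by (rule len)
    show "\<sigma> permutes {..<length (fst D)}" by (rule \<sigma>)
    fix j k assume "j < length (fst D)" "k < length (fst D)"
    thus "W D' j k = W D (\<sigma> j) (\<sigma> k)" by (rule W)
  qed
qed

lemma W_r1:
  assumes mv: "r1_move D D'" and jk: "j \<noteq> k"
  shows "length (fst D') = length (fst D) \<and> W D' j k = W D j k"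
proof -
  obtain i p a e1 e2 where i: "i < length (fst D)" and a: "a \<notin> labels D"
    and e: "(e1, e2) = ((a, False), (a, True)) \<or> (e1, e2) = ((a, True), (a, False))"
    and ws: "fst D' = ins_seg (fst D) i p [e1, e2]"
    and sg: "\<forall>x\<in>labels D. snd D' x = snd D x"
    using mv unfolding r1_move_def by blast
  have len: "length (fst D') = length (fst D)" using ws by simp
  have st: "set (fst D' ! m) = (if m = i then set (fst D ! i) \<union> {e1, e2} else set (fst D ! m))"
    if "m < length (fst D)" for m using set_ins_seg[OF i that] ws by simp
  have eq: "{x. arrow_from D' x j k} = {x. arrow_from D x j k}"
  proof -
    have "arrow_from D' x j k \<longleftrightarrow> arrow_from D x j k" for x
    proof (cases "x = a")
      case True
      have "\<not> arrow_from D x j k" using True a arrow_labels by blast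
      moreover have "\<not> arrow_from D' x j k"
        using True jk e not_label[OF a] unfolding arrow_from_def len by (auto simp: st split: if_splits)
      ultimately show ?thesis by simp
    next
      case False
      have "(x, h) \<in> set (fst D' ! m) \<longleftrightarrow> (x, h) \<in> set (fst D ! m)" if "m < length (fst D)" for m h
        using False e st[OF that] by auto
      then show ?thesis unfolding arrow_from_def len by blast
    qed
    thus ?thesis by simp
  qed
  show ?thesis unfolding W_def eq using len sg arrow_labels by (auto intro!: sum.cong)
qed

lemma W_r2:
  assumes mv: "r2_move D D'"
  shows "length (fst D') = length (fst D) \<and> W D' j k = W D j k"
proof -
  obtain i p j' q a b H where ab: "a \<noteq> b" and a: "a \<notin> labels D" and b: "b \<notin> labels D"
    and i: "i < length (fst D)" and j': "j' < length (fst D)"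
    and H: "H = [(a, True), (b, True)] \<or> H = [(b, True), (a, True)]"
    and ws: "fst D' = ins_seg (ins_seg (fst D) i p [(a, False), (b, False)]) j' q H"
    and sab: "snd D' b = - snd D' a"
    and sg: "\<forall>x\<in>labels D. snd D' x = snd D x"
    using mv unfolding r2_move_def by blast
  have len: "length (fst D') = length (fst D)" using ws by simp
  have sH: "set H = {(a, True), (b, True)}" using H by auto
  have st: "set (fst D' ! m) = set (fst D ! m) \<union> (if m = i then {(a, False), (b, False)} else {})
       \<union> (if m = j' then {(a, True), (b, True)} else {})"
    if m: "m < length (fst D)" for m
    using set_ins_seg[OF i m, of p "[(a, False), (b, False)]"]
      set_ins_seg[of j' "ins_seg (fst D) i p [(a, False), (b, False)]" m q H] j' m ws sH
    by auto
  have eq: "{x. arrow_from D' x j k} = {x. arrow_from D x j k} \<union> (if j = i \<and> k = j' then {a, b} else {})"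
  proof -
    have "arrow_from D' x j k \<longleftrightarrow> arrow_from D x j k \<or> (x \<in> {a, b} \<and> j = i \<and> k = j')" for x
    proof (cases "x = a \<or> x = b")
      case True
      have "\<not> arrow_from D x j k" using True a b arrow_labels by blast
      moreover have "arrow_from D' x j k \<longleftrightarrow> (j = i \<and> k = j')"
      proof -
        have F: "(x, False) \<in> set (fst D' ! m) \<longleftrightarrow> m = i" if "m < length (fst D)" for m
          using True not_label[OF a that] not_label[OF b that] st[OF that] by auto
        have H: "(x, True) \<in> set (fst D' ! m) \<longleftrightarrow> m = j'" if "m < length (fst D)" for m
          using True not_label[OF a that] not_label[OF b that] st[OF that] by auto
        show ?thesis unfolding arrow_from_def len using F H i j' by blast
      qed
      ultimately show ?thesis using True by auto
    next
      case False
      have "(x, h) \<in> set (fst D' ! m) \<longleftrightarrow> (x, h) \<in> set (fst D ! m)" if "m < length (fst D)" for m h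
        using False st[OF that] by auto
      then show ?thesis unfolding arrow_from_def len using False by blast
    qed
    thus ?thesis by auto
  qed
  have disj: "{x. arrow_from D x j k} \<inter> {a, b} = {}" using a b arrow_labels by blast
  have s1: "(\<Sum>x\<in>{x. arrow_from D x j k}. snd D' x) = W D j k"
    unfolding W_def using sg arrow_labels by (auto intro!: sum.cong)
  show ?thesis
  proof (cases "j = i \<and> k = j'")
    case True
    have "W D' j k = sum (snd D') ({x. arrow_from D x j k} \<union> {a, b})"
      unfolding W_def eq using True by simp
    also have "\<dots> = (\<Sum>x\<in>{x. arrow_from D x j k}. snd D' x) + (\<Sum>x\<in>{a, b}. snd D' x)"
      by (rule sum.union_disjoint) (use finite_arrows disj in auto)
    also have "\<dots> = W D j k" using s1 ab sab by simp
    finally show ?thesis using len by simp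
  next
    case False
    have "{x. arrow_from D' x j k} = {x. arrow_from D x j k}" using eq False by simp
    hence "W D' j k = (\<Sum>x\<in>{x. arrow_from D x j k}. snd D' x)" unfolding W_def by simp
    thus ?thesis using s1 len by simp
  qed
qed

lemma W_r3:
  assumes mv: "r3_move D D'" and wf: "wf_gauss D"
  shows "length (fst D') = length (fst D) \<and> W D' j k = W D j k"
proof -
  obtain a b c where
    T: "adj (fst D) (a, False) (b, False) \<or> adj (fst D) (b, False) (a, False)"
    and M: "adj (fst D) (a, True) (c, False) \<or> adj (fst D) (c, False) (a, True)"
    and B: "adj (fst D) (b, True) (c, True) \<or> adj (fst D) (c, True) (b, True)"
    and s: "snd D' = snd D"
    and ws: "fst D' = map (map (swp (a, False) (b, False) \<circ> swp (a, True) (c, False)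
                          \<circ> swp (b, True) (c, True))) (fst D)"
    using mv unfolding r3_move_def Let_def by blast
  have len: "length (fst D') = length (fst D)" using ws by simp
  have "set (fst D' ! m) = set (fst D ! m)" if m: "m < length (fst D)" for m
  proof -
    let ?S = "set (fst D ! m)"
    have iT: "(a, False) \<in> ?S \<longleftrightarrow> (b, False) \<in> ?S" using T adj_iff[OF wf _ m] by blast
    have iM: "(a, True) \<in> ?S \<longleftrightarrow> (c, False) \<in> ?S" using M adj_iff[OF wf _ m] by blast
    have iB: "(b, True) \<in> ?S \<longleftrightarrow> (c, True) \<in> ?S" using B adj_iff[OF wf _ m] by blast
    have "set (fst D' ! m) = swp (a, False) (b, False) ` swp (a, True) (c, False) ` swp (b, True) (c, True) ` ?S"
      using ws m by (simp add: image_comp)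
    thus ?thesis using swp_image iT iM iB by metis
  qed
  thus ?thesis using W_same[OF len _ s] len by blast
qed

lemma W_forb:
  assumes mv: "forb_move D D'" and wf: "wf_gauss D"
  shows "length (fst D') = length (fst D) \<and> W D' j k = W D j k"
proof -
  obtain x y h where A: "adj (fst D) (x, h) (y, h)"
    and ws: "fst D' = map (map (swp (x, h) (y, h))) (fst D)" and s: "snd D' = snd D"
    using mv unfolding forb_move_def by blast
  have len: "length (fst D') = length (fst D)" using ws by simp
  have "set (fst D' ! m) = set (fst D ! m)" if m: "m < length (fst D)" for m
    using ws m swp_image adj_iff[OF wf A m] by simp
  thus ?thesis using W_same[OF len _ s] len by blast
qed

definition Prel :: "gauss \<Rightarrow> gauss \<Rightarrow> bool" where
  "Prel D D' \<longleftrightarrow> length (fst D') = length (fst D) \<and> (\<exists>\<sigma>. \<sigma> permutes {..<length (fst D)} \<and>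
     (\<forall>j<length (fst D). \<forall>k<length (fst D). j \<noteq> k \<longrightarrow> W D' j k = W D (\<sigma> j) (\<sigma> k)))"

lemma Prel_id:
  assumes "length (fst D') = length (fst D)" "\<And>j k. j \<noteq> k \<Longrightarrow> W D' j k = W D j k"
  shows "Prel D D'"
  unfolding Prel_def using assms permutes_id by (metis id_apply)

lemma Prel_refl: "Prel D D"
  by (rule Prel_id) auto

lemma Prel_sym:
  assumes "Prel D D'" shows "Prel D' D"
proof -
  obtain \<sigma> where len: "length (fst D') = length (fst D)" and \<sigma>: "\<sigma> permutes {..<length (fst D)}"
    and W: "\<forall>j<length (fst D). \<forall>k<length (fst D). j \<noteq> k \<longrightarrow> W D' j k = W D (\<sigma> j) (\<sigma> k)"
    using assms unfolding Prel_def by blast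
  have \<tau>: "inv \<sigma> permutes {..<length (fst D)}" using permutes_inv[OF \<sigma>] .
  have "W D j k = W D' (inv \<sigma> j) (inv \<sigma> k)"
    if j: "j < length (fst D)" and k: "k < length (fst D)" and jk: "j \<noteq> k" for j k
  proof -
    have l: "inv \<sigma> j < length (fst D)" "inv \<sigma> k < length (fst D)"
      using permutes_in_image[OF \<tau>] j k by auto
    have e1: "\<sigma> (inv \<sigma> j) = j" and e2: "\<sigma> (inv \<sigma> k) = k"
      using permutes_inverses(1)[OF \<sigma>] by auto
    have ne: "inv \<sigma> j \<noteq> inv \<sigma> k" using e1 e2 jk by auto
    have "W D' (inv \<sigma> j) (inv \<sigma> k) = W D (\<sigma> (inv \<sigma> j)) (\<sigma> (inv \<sigma> k))"
      using W l ne by blast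
    thus ?thesis using e1 e2 by simp
  qed
  thus ?thesis unfolding Prel_def using len \<tau> by auto
qed

lemma Prel_trans:
  assumes "Prel D D'" "Prel D' D''" shows "Prel D D''"
proof -
  obtain \<sigma> where len: "length (fst D') = length (fst D)" and \<sigma>: "\<sigma> permutes {..<length (fst D)}"
    and W: "\<forall>j<length (fst D). \<forall>k<length (fst D). j \<noteq> k \<longrightarrow> W D' j k = W D (\<sigma> j) (\<sigma> k)"
    using assms(1) unfolding Prel_def by blast
  obtain \<tau> where len': "length (fst D'') = length (fst D')" and \<tau>: "\<tau> permutes {..<length (fst D)}"
    and W': "\<forall>j<length (fst D). \<forall>k<length (fst D). j \<noteq> k \<longrightarrow> W D'' j k = W D' (\<tau> j) (\<tau> k)"
    using assms(2) len unfolding Prel_def by auto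
  have "W D'' j k = W D ((\<sigma> \<circ> \<tau>) j) ((\<sigma> \<circ> \<tau>) k)"
    if j: "j < length (fst D)" and k: "k < length (fst D)" and jk: "j \<noteq> k" for j k
  proof -
    have "\<tau> j < length (fst D)" "\<tau> k < length (fst D)"
      using permutes_in_image[OF \<tau>] j k by auto
    moreover have "\<tau> j \<noteq> \<tau> k" using jk permutes_inj[OF \<tau>] by (metis injD)
    ultimately show ?thesis using W W' j k jk by simp
  qed
  thus ?thesis unfolding Prel_def using len len' permutes_compose[OF \<tau> \<sigma>] by auto
qed

lemma Prel_reid: "reid_step D D' \<Longrightarrow> Prel D D'"
  unfolding reid_step_def
proof (elim conjE disjE)
  assume wf: "wf_gauss D" and iso: "gauss_iso D D'"
  obtain \<sigma> where len: "length (fst D') = length (fst D)" and \<sigma>: "\<sigma> permutes {..<length (fst D)}"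
    and W: "\<forall>j<length (fst D). \<forall>k<length (fst D). W D' j k = W D (\<sigma> j) (\<sigma> k)"
    using W_iso[OF iso wf] by (elim conjE exE)
  show "Prel D D'" unfolding Prel_def
  proof (intro conjI exI[of _ \<sigma>] allI impI)
    show "length (fst D') = length (fst D)" by (rule len)
    show "\<sigma> permutes {..<length (fst D)}" by (rule \<sigma>)
    fix j k assume "j < length (fst D)" "k < length (fst D)"
    thus "W D' j k = W D (\<sigma> j) (\<sigma> k)" using W by simp
  qed
next
  assume m: "r1_move D D'"
  show "Prel D D'"
  proof (rule Prel_id)
    show "length (fst D') = length (fst D)" using W_r1[OF m, of 0 1] by simp
    fix j k :: nat assume "j \<noteq> k" thus "W D' j k = W D j k" using W_r1[OF m] by simp
  qed
next
  assume m: "r2_move D D'"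
  show "Prel D D'"
  proof (rule Prel_id)
    show "length (fst D') = length (fst D)" using W_r2[OF m, of 0 1] by simp
    fix j k :: nat show "W D' j k = W D j k" using W_r2[OF m] by simp
  qed
next
  assume w: "wf_gauss D" and m: "r3_move D D'"
  show "Prel D D'"
  proof (rule Prel_id)
    show "length (fst D') = length (fst D)" using W_r3[OF m w, of 0 1] by simp
    fix j k :: nat show "W D' j k = W D j k" using W_r3[OF m w] by simp
  qed
qed

lemma Prel_forb: "forb_step D D' \<Longrightarrow> Prel D D'"
  unfolding forb_step_def
proof (elim disjE conjE)
  assume "reid_step D D'" thus "Prel D D'" by (rule Prel_reid)
next
  assume w: "wf_gauss D" and m: "forb_move D D'"
  show "Prel D D'"
  proof (rule Prel_id)
    show "length (fst D') = length (fst D)" using W_forb[OF m w, of 0 1] by simp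
    fix j k :: nat show "W D' j k = W D j k" using W_forb[OF m w] by simp
  qed
qed

lemma Prel_forb_equiv: "forb_equiv D D' \<Longrightarrow> Prel D D'"
  unfolding forb_equiv_def
proof (induction rule: rtranclp_induct)
  case base thus ?case by (rule Prel_refl)
next
  case (step y z)
  from step.hyps(2) have "Prel y z"
  proof
    assume "forb_step y z" thus ?thesis by (rule Prel_forb)
  next
    assume "forb_step z y" thus ?thesis by (rule Prel_sym[OF Prel_forb])
  qed
  thus ?case by (rule Prel_trans[OF step.IH])
qed

lemma Prel_reid_equiv: "reid_equiv D D' \<Longrightarrow> Prel D D'"
  unfolding reid_equiv_def
proof (induction rule: rtranclp_induct)
  case base thus ?case by (rule Prel_refl)
next
  case (step y z)
  from step.hyps(2) have "Prel y z"
  proof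
    assume "reid_step y z" thus ?thesis by (rule Prel_reid)
  next
    assume "reid_step z y" thus ?thesis by (rule Prel_sym[OF Prel_reid])
  qed
  thus ?case by (rule Prel_trans[OF step.IH])
qed

lemma fm_reduced:
  assumes r: "reduced R"
  shows "forb_matrix R j j = 0" and "forb_matrix R j k = W R j k"
proof -
  have r2: "\<forall>a j. \<not> arrow_from R a j j" using r[unfolded reduced_def] by (elim conjE)
  have r3: "\<forall>a b j k. arrow_from R a j k \<and> arrow_from R b j k \<longrightarrow> snd R a = snd R b"
    using r[unfolded reduced_def] by (elim conjE)
  have e: "{a. arrow_from R a j j} = {}" using r2 by simp
  show "forb_matrix R j j = 0" unfolding forb_matrix_def Let_def e by simp
  let ?A = "{a. arrow_from R a j k}"
  have same: "\<And>a b. arrow_from R a j k \<Longrightarrow> arrow_from R b j k \<Longrightarrow> snd R a = snd R b"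
    using r3 by blast
  show "forb_matrix R j k = W R j k"
  proof (cases "?A = {}")
    case True thus ?thesis unfolding forb_matrix_def W_def Let_def by simp
  next
    case False
    have sm: "(SOME a. a \<in> ?A) \<in> ?A" by (subst some_in_eq) (rule False)
    have "W R j k = (\<Sum>a\<in>?A. snd R (SOME a. a \<in> ?A))" unfolding W_def
    proof (rule sum.cong)
      fix x assume x: "x \<in> ?A"
      show "snd R x = snd R (SOME a. a \<in> ?A)" by (rule same[OF CollectD[OF x] CollectD[OF sm]])
    qed simp
    also have "\<dots> = snd R (SOME a. a \<in> ?A) * int (card ?A)" by (simp add: mult.commute)
    finally show ?thesis using False unfolding forb_matrix_def Let_def by simp
  qed
qed

theorem mainTheorem2:
  fixes D1 D2 R1 R2 :: gauss and n :: nat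
  assumes "wf_gauss D1" and "wf_gauss D2"
    and "length (fst D1) = n"
    and "reid_equiv D1 D2"
    and "forb_equiv D1 R1" and "reduced R1"
    and "forb_equiv D2 R2" and "reduced R2"
  shows "length (fst R1) = n \<and> length (fst R2) = n \<and>
         (\<exists>\<sigma>. \<sigma> permutes {..<n} \<and>
            (\<forall>j<n. \<forall>k<n. forb_matrix R2 j k = forb_matrix R1 (\<sigma> j) (\<sigma> k)))"
proof -
  have P1: "Prel D1 R1" using assms(5) by (rule Prel_forb_equiv)
  have P2: "Prel D1 D2" using assms(4) by (rule Prel_reid_equiv)
  have P3: "Prel D2 R2" using assms(7) by (rule Prel_forb_equiv)
  have P: "Prel R1 R2" using Prel_trans[OF Prel_trans[OF Prel_sym[OF P1] P2] P3] .
  have l1: "length (fst R1) = n" using P1 assms(3) unfolding Prel_def by simp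
  obtain \<sigma> where l2: "length (fst R2) = n" and \<sigma>: "\<sigma> permutes {..<n}"
    and W: "\<forall>j<n. \<forall>k<n. j \<noteq> k \<longrightarrow> W R2 j k = W R1 (\<sigma> j) (\<sigma> k)"
    using P l1 unfolding Prel_def by auto
  have "forb_matrix R2 j k = forb_matrix R1 (\<sigma> j) (\<sigma> k)" if j: "j < n" and k: "k < n" for j k
  proof (cases "j = k")
    case True thus ?thesis using fm_reduced(1)[OF assms(6)] fm_reduced(1)[OF assms(8)] by simp
  next
    case False
    thus ?thesis using W j k fm_reduced(2)[OF assms(6)] fm_reduced(2)[OF assms(8)] by simp
  qed
  thus ?thesis using l1 l2 \<sigma> by blast
qed

end
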